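(* Let $N\ge3$ and let $s=(x^1,\dots,x^m,\dots,x^{N-1},u,N)\in S^N\cap S_{nc}$ be a state with $c(G|s)=1$, $\widehat C(s)=C_m$, having the sure-capture property, and with $x^m\notin N(u)$. Then there exists a state $\tilde s=(x^1,\dots,\tilde x^m,\dots,x^{N-1},u,N)\in S^N\cap S_{nc}$, differing from $s$ only in the position of $C_m$, such that (i) $\tilde x^m\in N(u)$, (ii) $c(G|\tilde s)=1$, (iii) $\widehat C(\tilde s)=C_m$, and (iv) $\tilde s$ has the sure-capture property.
   Context: Board and moves: $G=(V,E)$ finite, simple, connected, undirected; $N(u)$ is the open neighbourhood of $u$. There are $N\ge3$ tokens, cops $C_1,\dots,C_{N-1}$ (tokens $1,\dots,N-1$) and robber $R$ (token $N$). A state is $s=(x^1,\dots,x^N,n)$ with $x^i\in V$ the position of token $i$ and $n$ the token to move; $S^n$ is the set of states with token $n$ to move; $s$ is a capture state if $x^i=x^N$ for some $i\le N-1$, and $S_{nc}$ is the set of noncapture states. In each turn the token to move moves to a vertex of its closed neighbourhood (may stay put); order $C_1,\dots,C_{N-1},R,C_1,\dots$; the game ends at the first capture. The modified cops-and-robber (CR) game is the two-player zero-sum game where one player controls all cops, the other the robber, and if capture occurs at time $t$ (number of turns) the robber's payoff is $-\gamma^t$ ($0$ if never), $\gamma\in(0,1)$. $\widehat\Sigma^n$ denotes the set of pure positional strategies of token $n$ that are components of optimal strategies in this game (CR-optimal strategies). For $s\in S_{nc}$, whenever CR-optimal play from $s$ leads to capture, it is always the same cop, denoted $\widehat C(s)$,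 that effects it. State cop number. For $s\in S_{nc}$, $c(G|s)=c_N(G|s)$ is the minimum $k\in\{1,\dots,N-1\}$ for which there exist $k$ cops and strategies for them such that, starting from $s$, a capture (by any cop) occurs whatever the other $N-k$ tokens (including $R$) do; $c(G|s)=\infty$ if no such $k$ exists. Say that a state $s\in S_{nc}$ with $c(G|s)=1$ and $\widehat C(s)=C_m$ has the sure-capture property if for every $\widehat\sigma^m\in\widehat\Sigma^m$ and every strategy profile $\sigma^{-m}$ of the other tokens, play from $s$ under $(\widehat\sigma^m,\sigma^{-m})$ ends in a capture in which $C_m$ is on the robber's vertex. *)

theory Defs
  imports Main "HOL-Library.Extended_Nat"
begin

definition simple_connected_graph :: "'v set \<Rightarrow> ('v \<Rightarrow> 'v \<Rightarrow> bool) \<Rightarrow> bool" where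
  "simple_connected_graph V E \<longleftrightarrow>
     finite V \<and> V \<noteq> {} \<and>
     (\<forall>u v. E u v \<longrightarrow> u \<in> V \<and> v \<in> V) \<and>
     (\<forall>u v. E u v \<longrightarrow> E v u) \<and>
     (\<forall>v. \<not> E v v) \<and>
     (\<forall>u\<in>V. \<forall>v\<in>V. E\<^sup>*\<^sup>* u v)"

definition nbhd :: "'v set \<Rightarrow> ('v \<Rightarrow> 'v \<Rightarrow> bool) \<Rightarrow> 'v \<Rightarrow> 'v set" where
  "nbhd V E u = {w \<in> V. E u w}"

definition cnbhd :: "'v set \<Rightarrow> ('v \<Rightarrow> 'v \<Rightarrow> bool) \<Rightarrow> 'v \<Rightarrow> 'v set" where
  "cnbhd V E u = {w \<in> V. w = u \<or> E u w}"

text \<open>A state (x^1,...,x^N,n) is represented as a pair (xs, n) with xs a list of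
  length N: token i (1 \<le> i \<le> N) sits at xs ! (i-1); cops are tokens 1..N-1,
  the robber is token N; n is the token to move.\<close>
type_synonym 'v state = "'v list \<times> nat"

definition pos :: "'v state \<Rightarrow> nat \<Rightarrow> 'v" where
  "pos s i = fst s ! (i - 1)"

definition valid_state :: "'v set \<Rightarrow> nat \<Rightarrow> 'v state \<Rightarrow> bool" where
  "valid_state V N s \<longleftrightarrow> length (fst s) = N \<and> set (fst s) \<subseteq> V \<and> snd s \<in> {1..N}"

definition is_capture :: "nat \<Rightarrow> 'v state \<Rightarrow> bool" where
  "is_capture N s \<longleftrightarrow> (\<exists>i\<in>{1..N-1}. pos s i = pos s N)"

definition next_tok :: "nat \<Rightarrow> nat \<Rightarrow> nat" where
  "next_tok N n = n mod N + 1"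

definition step :: "nat \<Rightarrow> 'v state \<Rightarrow> 'v \<Rightarrow> 'v state" where
  "step N s v = ((fst s)[snd s - 1 := v], next_tok N (snd s))"

type_synonym 'v strat = "'v state \<Rightarrow> 'v"
type_synonym 'v profile = "nat \<Rightarrow> 'v strat"

definition is_strat :: "'v set \<Rightarrow> ('v \<Rightarrow> 'v \<Rightarrow> bool) \<Rightarrow> nat \<Rightarrow> nat \<Rightarrow> 'v strat \<Rightarrow> bool" where
  "is_strat V E N i \<sigma> \<longleftrightarrow>
     (\<forall>s. valid_state V N s \<and> snd s = i \<longrightarrow> \<sigma> s \<in> cnbhd V E (pos s i))"

definition valid_profile :: "'v set \<Rightarrow> ('v \<Rightarrow> 'v \<Rightarrow> bool) \<Rightarrow> nat \<Rightarrow> 'v profile \<Rightarrow> bool" where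
  "valid_profile V E N \<sigma> \<longleftrightarrow> (\<forall>i\<in>{1..N}. is_strat V E N i (\<sigma> i))"

fun play :: "nat \<Rightarrow> 'v profile \<Rightarrow> 'v state \<Rightarrow> nat \<Rightarrow> 'v state" where
  "play N \<sigma> s 0 = s"
| "play N \<sigma> s (Suc t) = step N (play N \<sigma> s t) (\<sigma> (snd (play N \<sigma> s t)) (play N \<sigma> s t))"

definition first_capture :: "nat \<Rightarrow> 'v profile \<Rightarrow> 'v state \<Rightarrow> nat \<Rightarrow> bool" where
  "first_capture N \<sigma> s t \<longleftrightarrow>
     is_capture N (play N \<sigma> s t) \<and> (\<forall>t'<t. \<not> is_capture N (play N \<sigma> s t'))"

definition rpay :: "real \<Rightarrow> nat \<Rightarrow> 'v profile \<Rightarrow> 'v state \<Rightarrow> real" where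
  "rpay \<gamma> N \<sigma> s =
     (if \<exists>t. is_capture N (play N \<sigma> s t)
      then - (\<gamma> ^ (LEAST t. is_capture N (play N \<sigma> s t))) else 0)"

text \<open>A profile is CR-optimal iff (cops' part, robber's part) is a saddle point
  of the zero-sum game from every state: the robber cannot gain by deviating,
  and the cops (jointly) cannot reduce the robber's payoff by deviating.\<close>
definition cr_optimal :: "real \<Rightarrow> 'v set \<Rightarrow> ('v \<Rightarrow> 'v \<Rightarrow> bool) \<Rightarrow> nat \<Rightarrow> 'v profile \<Rightarrow> bool" where
  "cr_optimal \<gamma> V E N \<sigma> \<longleftrightarrow> valid_profile V E N \<sigma> \<and>
     (\<forall>s. valid_state V N s \<longrightarrow>
        (\<forall>\<sigma>'. valid_profile V E N \<sigma>' \<longrightarrow>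
           rpay \<gamma> N (\<sigma>(N := \<sigma>' N)) s \<le> rpay \<gamma> N \<sigma> s \<and>
           rpay \<gamma> N \<sigma> s \<le> rpay \<gamma> N (\<sigma>'(N := \<sigma> N)) s))"

definition hatSigma :: "real \<Rightarrow> 'v set \<Rightarrow> ('v \<Rightarrow> 'v \<Rightarrow> bool) \<Rightarrow> nat \<Rightarrow> nat \<Rightarrow> 'v strat set" where
  "hatSigma \<gamma> V E N n = {\<tau>. \<exists>\<sigma>. cr_optimal \<gamma> V E N \<sigma> \<and> \<sigma> n = \<tau>}"

definition hatC_is :: "real \<Rightarrow> 'v set \<Rightarrow> ('v \<Rightarrow> 'v \<Rightarrow> bool) \<Rightarrow> nat \<Rightarrow> 'v state \<Rightarrow> nat \<Rightarrow> bool" where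
  "hatC_is \<gamma> V E N s m \<longleftrightarrow> m \<in> {1..N-1} \<and>
     (\<exists>\<sigma> t. cr_optimal \<gamma> V E N \<sigma> \<and> first_capture N \<sigma> s t) \<and>
     (\<forall>\<sigma> t. cr_optimal \<gamma> V E N \<sigma> \<and> first_capture N \<sigma> s t \<longrightarrow>
        pos (play N \<sigma> s t) m = pos (play N \<sigma> s t) N)"

definition k_cops_capture :: "'v set \<Rightarrow> ('v \<Rightarrow> 'v \<Rightarrow> bool) \<Rightarrow> nat \<Rightarrow> 'v state \<Rightarrow> nat \<Rightarrow> bool" where
  "k_cops_capture V E N s k \<longleftrightarrow>
     (\<exists>K. K \<subseteq> {1..N-1} \<and> card K = k \<and>
        (\<exists>\<sigma>K. (\<forall>i\<in>K. is_strat V E N i (\<sigma>K i)) \<and>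
           (\<forall>\<sigma>. valid_profile V E N \<sigma> \<longrightarrow>
              (\<exists>t. is_capture N (play N (\<lambda>i. if i \<in> K then \<sigma>K i else \<sigma> i) s t)))))"

definition state_cop_number :: "'v set \<Rightarrow> ('v \<Rightarrow> 'v \<Rightarrow> bool) \<Rightarrow> nat \<Rightarrow> 'v state \<Rightarrow> enat" where
  "state_cop_number V E N s =
     (if \<exists>k\<in>{1..N-1}. k_cops_capture V E N s k
      then enat (LEAST k. k \<in> {1..N-1} \<and> k_cops_capture V E N s k)
      else \<infinity>)"

definition sure_capture :: "real \<Rightarrow> 'v set \<Rightarrow> ('v \<Rightarrow> 'v \<Rightarrow> bool) \<Rightarrow> nat \<Rightarrow> 'v state \<Rightarrow> nat \<Rightarrow> bool" where
  "sure_capture \<gamma> V E N s m \<longleftrightarrow>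
     (\<forall>\<tau>\<in>hatSigma \<gamma> V E N m. \<forall>\<sigma>. valid_profile V E N \<sigma> \<longrightarrow>
        (\<exists>t. first_capture N (\<sigma>(m := \<tau>)) s t \<and>
             pos (play N (\<sigma>(m := \<tau>)) s t) m = pos (play N (\<sigma>(m := \<tau>)) s t) N))"

end

theory Submission
  imports Defs
begin

lemma play_add: "play N \<sigma> s (a + b) = play N \<sigma> (play N \<sigma> s a) b"
  by (induction b) auto

lemma play_one: "play N \<sigma> s (Suc 0) = step N s (\<sigma> (snd s) s)"
  by simp

lemma play_Suc': "play N \<sigma> s (Suc k) = play N \<sigma> (play N \<sigma> s (Suc 0)) k"
  using play_add[of N \<sigma> s 1 k] by simp

lemma is_stratD:
  assumes "is_strat V E N i \<sigma>" "valid_state V N q" "snd q = i"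
  shows "\<sigma> q \<in> cnbhd V E (pos q i)"
  using assms unfolding is_strat_def by blast

lemma valid_step:
  assumes "valid_state V N q" "v \<in> cnbhd V E (pos q (snd q))"
  shows "valid_state V N (step N q v)"
proof -
  have N: "N > 0" using assms(1) unfolding valid_state_def by auto
  have "v \<in> V" using assms(2) unfolding cnbhd_def by auto
  moreover have "set ((fst q)[snd q - 1 := v]) \<subseteq> insert v (set (fst q))"
    by (rule set_update_subset_insert)
  moreover have "next_tok N (snd q) \<in> {1..N}" unfolding next_tok_def using N by (simp add: Suc_le_eq)
  ultimately show ?thesis using assms(1) unfolding valid_state_def step_def by auto
qed

lemma play_valid:
  assumes "valid_profile V E N \<sigma>" "valid_state V N q"
  shows "valid_state V N (play N \<sigma> q k)"
proof (induction k)
  case 0 then show ?case using assms by simp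
next
  case (Suc k)
  let ?q = "play N \<sigma> q k"
  have "snd ?q \<in> {1..N}" using Suc unfolding valid_state_def by auto
  then have "is_strat V E N (snd ?q) (\<sigma> (snd ?q))" using assms(1) unfolding valid_profile_def by auto
  then have "\<sigma> (snd ?q) ?q \<in> cnbhd V E (pos ?q (snd ?q))" using Suc is_stratD by blast
  then show ?case using valid_step[OF Suc] by simp
qed

lemma play_agree:
  assumes "\<forall>i<k. \<sigma>a (snd (play N \<sigma>a q i)) (play N \<sigma>a q i) = \<sigma>b (snd (play N \<sigma>a q i)) (play N \<sigma>a q i)"
  shows "i \<le> k \<Longrightarrow> play N \<sigma>b q i = play N \<sigma>a q i"
proof (induction i)
  case 0 then show ?case by simp
next
  case (Suc i)
  then have "play N \<sigma>b q i = play N \<sigma>a q i" by simp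
  moreover have "i < k" using Suc by simp
  ultimately show ?case using assms by simp
qed

lemma first_capture_unique:
  assumes "first_capture N \<sigma> q t1" "first_capture N \<sigma> q t2" shows "t1 = t2"
  using assms unfolding first_capture_def by (metis linorder_neqE_nat)

lemma first_capture_exists:
  assumes "is_capture N (play N \<sigma> q t)" shows "\<exists>t'. first_capture N \<sigma> q t'"
proof -
  have "\<exists>n. is_capture N (play N \<sigma> q n) \<and> (\<forall>m<n. \<not> is_capture N (play N \<sigma> q m))"
    using assms exists_least_iff[of "\<lambda>n. is_capture N (play N \<sigma> q n)"] by blast
  then show ?thesis unfolding first_capture_def by blast
qed

lemma rpay_first:
  assumes "first_capture N \<sigma> q t" shows "rpay \<gamma> N \<sigma> q = - (\<gamma> ^ t)"
proof -
  have "(LEAST t. is_capture N (play N \<sigma> q t)) = t"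
    using assms unfolding first_capture_def by (intro Least_equality) (auto simp: not_less[symmetric])
  then show ?thesis using assms unfolding rpay_def first_capture_def by auto
qed

lemma rpay_none:
  assumes "\<forall>t. \<not> is_capture N (play N \<sigma> q t)" shows "rpay \<gamma> N \<sigma> q = 0"
  using assms unfolding rpay_def by auto

lemma rpay_capture:
  assumes "is_capture N q" shows "rpay \<gamma> N \<sigma> q = -1"
proof -
  have "first_capture N \<sigma> q 0" using assms unfolding first_capture_def by simp
  from rpay_first[OF this] show ?thesis by simp
qed

lemma rpay_bounds:
  assumes "0 < \<gamma>" "\<gamma> < 1"
  shows "-1 \<le> rpay \<gamma> N \<sigma> q \<and> rpay \<gamma> N \<sigma> q \<le> 0"
proof -
  have "\<And>t. \<gamma> ^ t \<le> 1" "\<And>t. 0 \<le> \<gamma> ^ t" using assms by (auto intro: power_le_one)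
  then show ?thesis unfolding rpay_def by auto
qed

lemma play_Suc_step: "play N \<sigma> q (Suc k) = play N \<sigma> (step N q (\<sigma> (snd q) q)) k"
  by (induction k) auto

lemma rpay_shift:
  assumes "\<not> is_capture N q"
  shows "rpay \<gamma> N \<sigma> q = \<gamma> * rpay \<gamma> N \<sigma> (step N q (\<sigma> (snd q) q))"
proof (cases "\<exists>t. is_capture N (play N \<sigma> q t)")
  case True
  then obtain t where t: "first_capture N \<sigma> q t" using first_capture_exists by blast
  have "t \<noteq> 0"
  proof
    assume "t = 0" then show False using t assms unfolding first_capture_def by simp
  qed
  then obtain t1 where t1: "t = Suc t1" by (cases t) auto
  have "first_capture N \<sigma> (step N q (\<sigma> (snd q) q)) t1"
    using t unfolding first_capture_def t1 by (metis Suc_mono play_Suc_step)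
  then show ?thesis using rpay_first[OF t, of \<gamma>] rpay_first[of N \<sigma> _ t1 \<gamma>] t1 by simp
next
  case False
  then have "\<forall>t. \<not> is_capture N (play N \<sigma> (step N q (\<sigma> (snd q) q)) t)"
    by (metis play_Suc_step)
  then show ?thesis using rpay_none False by (metis mult_zero_right)
qed

lemma rpay_shift_n:
  assumes "\<forall>i<j. \<not> is_capture N (play N \<sigma> q i)"
  shows "rpay \<gamma> N \<sigma> q = \<gamma> ^ j * rpay \<gamma> N \<sigma> (play N \<sigma> q j)"
  using assms
proof (induction j)
  case 0 then show ?case by simp
next
  case (Suc j)
  then have IH: "rpay \<gamma> N \<sigma> q = \<gamma> ^ j * rpay \<gamma> N \<sigma> (play N \<sigma> q j)" by simp
  have "\<not> is_capture N (play N \<sigma> q j)" using Suc.prems by simp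
  from rpay_shift[OF this] have "rpay \<gamma> N \<sigma> (play N \<sigma> q j) = \<gamma> * rpay \<gamma> N \<sigma> (play N \<sigma> q (Suc j))"
    by simp
  then show ?case using IH by simp
qed

lemma play_periodic:
  assumes "play N \<sigma> q p = q" "0 < p"
  shows "play N \<sigma> q i = play N \<sigma> q (i mod p)"
proof (induction i rule: less_induct)
  case (less i)
  show ?case
  proof (cases "i < p")
    case True then show ?thesis by simp
  next
    case False
    then have "i = p + (i - p)" by simp
    then have "play N \<sigma> q i = play N \<sigma> q (i - p)" using play_add[of N \<sigma> q p "i-p"] assms(1) by simp
    also have "\<dots> = play N \<sigma> q ((i - p) mod p)" using less assms(2) False by simp
    also have "(i - p) mod p = i mod p" using False by (simp add: le_mod_geq)
    finally show ?thesis .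
  qed
qed

lemma periodic_nocap:
  assumes "play N \<sigma> q p = q" "0 < p" "\<forall>i<p. \<not> is_capture N (play N \<sigma> q i)"
  shows "\<not> is_capture N (play N \<sigma> q i)"
  using play_periodic[OF assms(1,2), of i] assms(2,3) mod_less_divisor[OF assms(2), of i] by metis

lemma valid_profileD:
  assumes "valid_profile V E N \<sigma>" "valid_state V N q"
  shows "\<sigma> (snd q) q \<in> cnbhd V E (pos q (snd q))"
proof -
  have "snd q \<in> {1..N}" using assms(2) unfolding valid_state_def by auto
  then have "is_strat V E N (snd q) (\<sigma> (snd q))" using assms(1) unfolding valid_profile_def by auto
  then show ?thesis using is_stratD assms(2) by blast
qed

lemma cr_optimalD:
  assumes "cr_optimal \<gamma> V E N \<sigma>" "valid_state V N q" "valid_profile V E N \<sigma>'"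
  shows "rpay \<gamma> N (\<sigma>(N := \<sigma>' N)) q \<le> rpay \<gamma> N \<sigma> q"
    "rpay \<gamma> N \<sigma> q \<le> rpay \<gamma> N (\<sigma>'(N := \<sigma> N)) q"
  using assms unfolding cr_optimal_def by blast+

lemma opt_val_eq:
  assumes "cr_optimal \<gamma> V E N \<sigma>1" "cr_optimal \<gamma> V E N \<sigma>2" "valid_state V N q"
  shows "rpay \<gamma> N \<sigma>1 q = rpay \<gamma> N \<sigma>2 q"
proof -
  have v1: "valid_profile V E N \<sigma>1" and v2: "valid_profile V E N \<sigma>2"
    using assms unfolding cr_optimal_def by auto
  have a: "rpay \<gamma> N \<sigma>1 q \<le> rpay \<gamma> N (\<sigma>2(N := \<sigma>1 N)) q" using cr_optimalD(2)[OF assms(1,3) v2] .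
  have b: "rpay \<gamma> N (\<sigma>2(N := \<sigma>1 N)) q \<le> rpay \<gamma> N \<sigma>2 q" using cr_optimalD(1)[OF assms(2,3) v1] .
  have c: "rpay \<gamma> N \<sigma>2 q \<le> rpay \<gamma> N (\<sigma>1(N := \<sigma>2 N)) q" using cr_optimalD(2)[OF assms(2,3) v1] .
  have d: "rpay \<gamma> N (\<sigma>1(N := \<sigma>2 N)) q \<le> rpay \<gamma> N \<sigma>1 q" using cr_optimalD(1)[OF assms(1,3) v2] .
  show ?thesis using a b c d by linarith
qed

lemma local_opt:
  assumes opt: "cr_optimal \<gamma> V E N \<sigma>" and g: "0 < \<gamma>" "\<gamma> < 1"
    and vq: "valid_state V N q" and nc: "\<not> is_capture N q"
    and v: "v \<in> cnbhd V E (pos q (snd q))"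
  shows "(snd q = N \<longrightarrow> \<gamma> * rpay \<gamma> N \<sigma> (step N q v) \<le> rpay \<gamma> N \<sigma> q) \<and>
         (snd q \<noteq> N \<longrightarrow> rpay \<gamma> N \<sigma> q \<le> \<gamma> * rpay \<gamma> N \<sigma> (step N q v))"
proof -
  define i where "i = snd q"
  define \<rho> where "\<rho> = \<sigma>(i := (\<sigma> i)(q := v))"
  define q' where "q' = step N q v"
  have vp: "valid_profile V E N \<sigma>" using opt unfolding cr_optimal_def by auto
  have vr: "valid_profile V E N \<rho>"
    unfolding valid_profile_def is_strat_def
  proof (intro ballI allI impI)
    fix j s' assume j: "j \<in> {1..N}" and s': "valid_state V N s' \<and> snd s' = j"
    show "\<rho> j s' \<in> cnbhd V E (pos s' j)"
    proof (cases "j = i \<and> s' = q")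
      case True then show ?thesis using v unfolding \<rho>_def i_def by auto
    next
      case False
      then have "\<rho> j s' = \<sigma> j s'" unfolding \<rho>_def by auto
      then show ?thesis using valid_profileD[OF vp, of s'] s' by auto
    qed
  qed
  have rq: "rpay \<gamma> N \<rho> q = \<gamma> * rpay \<gamma> N \<rho> q'"
    using rpay_shift[OF nc, of \<gamma> \<rho>] unfolding q'_def \<rho>_def i_def by simp
  have agree: "\<And>x. x \<noteq> q \<Longrightarrow> \<rho> (snd x) x = \<sigma> (snd x) x" unfolding \<rho>_def by auto
  have rob: "i = N \<Longrightarrow> rpay \<gamma> N \<rho> q \<le> rpay \<gamma> N \<sigma> q"
  proof -
    assume "i = N"
    then have "\<sigma>(N := \<rho> N) = \<rho>" unfolding \<rho>_def by auto
    then show ?thesis using cr_optimalD(1)[OF opt vq vr] by simp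
  qed
  have cop: "i \<noteq> N \<Longrightarrow> rpay \<gamma> N \<sigma> q \<le> rpay \<gamma> N \<rho> q"
  proof -
    assume "i \<noteq> N"
    then have "\<rho>(N := \<sigma> N) = \<rho>" unfolding \<rho>_def by auto
    then show ?thesis using cr_optimalD(2)[OF opt vq vr] by simp
  qed
  have bnd: "-1 \<le> rpay \<gamma> N \<sigma> q \<and> rpay \<gamma> N \<sigma> q \<le> 0" using rpay_bounds[OF g] .
  show ?thesis
  proof (cases "\<exists>j. play N \<sigma> q' j = q \<and> (\<forall>k\<le>j. \<not> is_capture N (play N \<sigma> q' k))")
    case False
    have eq: "rpay \<gamma> N \<rho> q' = rpay \<gamma> N \<sigma> q'"
    proof (cases "\<exists>t. is_capture N (play N \<sigma> q' t)")
      case True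
      then obtain T where T: "first_capture N \<sigma> q' T" using first_capture_exists by blast
      have "\<forall>k<T. \<rho> (snd (play N \<sigma> q' k)) (play N \<sigma> q' k) = \<sigma> (snd (play N \<sigma> q' k)) (play N \<sigma> q' k)"
      proof (intro allI impI)
        fix k assume "k < T"
        then have "\<forall>k'\<le>k. \<not> is_capture N (play N \<sigma> q' k')" using T unfolding first_capture_def by auto
        then have "play N \<sigma> q' k \<noteq> q" using False by blast
        then show "\<rho> (snd (play N \<sigma> q' k)) (play N \<sigma> q' k) = \<sigma> (snd (play N \<sigma> q' k)) (play N \<sigma> q' k)"
          using agree by blast
      qed
      then have "\<forall>k\<le>T. play N \<rho> q' k = play N \<sigma> q' k" using play_agree[where \<sigma>a=\<sigma> and \<sigma>b=\<rho> and k=T] by simp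
      then have "first_capture N \<rho> q' T" using T unfolding first_capture_def by auto
      then show ?thesis using rpay_first T by metis
    next
      case False2: False
      have "\<forall>k. \<rho> (snd (play N \<sigma> q' k)) (play N \<sigma> q' k) = \<sigma> (snd (play N \<sigma> q' k)) (play N \<sigma> q' k)"
      proof
        fix k
        have "\<forall>k'\<le>k. \<not> is_capture N (play N \<sigma> q' k')" using False2 by auto
        then have "play N \<sigma> q' k \<noteq> q" using False by blast
        then show "\<rho> (snd (play N \<sigma> q' k)) (play N \<sigma> q' k) = \<sigma> (snd (play N \<sigma> q' k)) (play N \<sigma> q' k)"
          using agree by blast
      qed
      then have "\<forall>k. play N \<rho> q' k = play N \<sigma> q' k" using play_agree[where \<sigma>a=\<sigma> and \<sigma>b=\<rho>] by (metis order_refl)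
      then have "\<forall>t. \<not> is_capture N (play N \<rho> q' t)" using False2 by auto
      then show ?thesis using rpay_none False2 by metis
    qed
    show ?thesis using rq rob cop eq unfolding i_def q'_def by auto
  next
    case True
    then obtain j where j: "play N \<sigma> q' j = q \<and> (\<forall>k\<le>j. \<not> is_capture N (play N \<sigma> q' k))"
      and jmin: "\<forall>j'<j. \<not> (play N \<sigma> q' j' = q \<and> (\<forall>k\<le>j'. \<not> is_capture N (play N \<sigma> q' k)))"
      using exists_least_iff[of "\<lambda>j. play N \<sigma> q' j = q \<and> (\<forall>k\<le>j. \<not> is_capture N (play N \<sigma> q' k))"]
      by blast
    have "\<forall>k<j. \<rho> (snd (play N \<sigma> q' k)) (play N \<sigma> q' k) = \<sigma> (snd (play N \<sigma> q' k)) (play N \<sigma> q' k)"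
    proof (intro allI impI)
      fix k assume k: "k < j"
      then have "play N \<sigma> q' k \<noteq> q" using jmin j by auto
      then show "\<rho> (snd (play N \<sigma> q' k)) (play N \<sigma> q' k) = \<sigma> (snd (play N \<sigma> q' k)) (play N \<sigma> q' k)"
        using agree by blast
    qed
    then have ag: "\<forall>k\<le>j. play N \<rho> q' k = play N \<sigma> q' k" using play_agree[where \<sigma>a=\<sigma> and \<sigma>b=\<rho> and k=j] by simp
    have step1: "step N q (\<rho> (snd q) q) = q'" unfolding q'_def \<rho>_def i_def by simp
    have per: "play N \<rho> q (Suc j) = q" using ag j step1 play_Suc_step[of N \<rho> q j] by simp
    have nc_all: "\<forall>k<Suc j. \<not> is_capture N (play N \<rho> q k)"
    proof (intro allI impI)
      fix k assume k: "k < Suc j"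
      show "\<not> is_capture N (play N \<rho> q k)"
      proof (cases k)
        case 0 then show ?thesis using nc by simp
      next
        case (Suc k')
        then have "play N \<rho> q k = play N \<sigma> q' k'" using ag k step1 play_Suc_step[of N \<rho> q k'] by simp
        then show ?thesis using j k Suc by auto
      qed
    qed
    have "\<forall>t. \<not> is_capture N (play N \<rho> q t)" using periodic_nocap[OF per _ nc_all] by blast
    then have r0: "rpay \<gamma> N \<rho> q = 0" using rpay_none by metis
    have sh: "rpay \<gamma> N \<sigma> q' = \<gamma> ^ j * rpay \<gamma> N \<sigma> q"
      using rpay_shift_n[of j N \<sigma> q' \<gamma>] j by auto
    have gj: "0 < \<gamma> ^ j" "\<gamma> ^ j \<le> 1" using g by (auto intro: power_le_one)
    show ?thesis
    proof (intro conjI impI)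
      assume "snd q = N"
      then have "rpay \<gamma> N \<sigma> q = 0" using rob r0 bnd unfolding i_def by auto
      then show "\<gamma> * rpay \<gamma> N \<sigma> (step N q v) \<le> rpay \<gamma> N \<sigma> q" using sh unfolding q'_def by simp
    next
      let ?x = "rpay \<gamma> N \<sigma> q"
      have "0 < \<gamma> * \<gamma> ^ j" "\<gamma> * \<gamma> ^ j \<le> 1" using g gj by (auto simp: mult_le_one)
      then have "(1 - \<gamma> * \<gamma> ^ j) * ?x \<le> 0" using bnd by (intro mult_nonneg_nonpos) auto
      then have "?x \<le> (\<gamma> * \<gamma> ^ j) * ?x" by (simp add: algebra_simps)
      then show "?x \<le> \<gamma> * rpay \<gamma> N \<sigma> (step N q v)" using sh unfolding q'_def by (simp add: mult.assoc)
    qed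
  qed
qed

lemma bound_le:
  fixes f :: "'v state \<Rightarrow> real"
  assumes g: "0 < \<gamma>" "\<gamma> < 1"
    and vr: "valid_profile V E N \<rho>" and vq: "valid_state V N q0"
    and fcap: "\<forall>q. valid_state V N q \<and> is_capture N q \<longrightarrow> f q = -1"
    and fle: "\<forall>q. valid_state V N q \<longrightarrow> f q \<le> 0"
    and fst: "\<forall>q. valid_state V N q \<and> \<not> is_capture N q \<longrightarrow> f q \<le> \<gamma> * f (step N q (\<rho> (snd q) q))"
  shows "f q0 \<le> rpay \<gamma> N \<rho> q0"
proof -
  have cl: "(\<forall>i<k. \<not> is_capture N (play N \<rho> q0 i)) \<longrightarrow> f q0 \<le> \<gamma> ^ k * f (play N \<rho> q0 k)" for k
  proof (induction k)
    case 0 then show ?case by simp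
  next
    case (Suc k)
    show ?case
    proof
      assume a: "\<forall>i<Suc k. \<not> is_capture N (play N \<rho> q0 i)"
      then have ih: "f q0 \<le> \<gamma> ^ k * f (play N \<rho> q0 k)" using Suc by simp
      have "valid_state V N (play N \<rho> q0 k)" using play_valid[OF vr vq] .
      moreover have "\<not> is_capture N (play N \<rho> q0 k)" using a by simp
      ultimately have "f (play N \<rho> q0 k) \<le> \<gamma> * f (step N (play N \<rho> q0 k) (\<rho> (snd (play N \<rho> q0 k)) (play N \<rho> q0 k)))" using fst by blast
      then have "f (play N \<rho> q0 k) \<le> \<gamma> * f (play N \<rho> q0 (Suc k))" by simp
      then have "\<gamma> ^ k * f (play N \<rho> q0 k) \<le> \<gamma> ^ k * (\<gamma> * f (play N \<rho> q0 (Suc k)))"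
        using g by (intro mult_left_mono) auto
      moreover have "\<gamma> ^ Suc k * f (play N \<rho> q0 (Suc k)) = \<gamma> ^ k * (\<gamma> * f (play N \<rho> q0 (Suc k)))"
        by (simp only: power_Suc2 mult.assoc)
      ultimately show "f q0 \<le> \<gamma> ^ Suc k * f (play N \<rho> q0 (Suc k))" using ih by linarith
    qed
  qed
  show ?thesis
  proof (cases "\<exists>t. is_capture N (play N \<rho> q0 t)")
    case True
    then obtain T where T: "first_capture N \<rho> q0 T" using first_capture_exists by blast
    have "f q0 \<le> \<gamma> ^ T * f (play N \<rho> q0 T)" using cl T unfolding first_capture_def by blast
    moreover have "f (play N \<rho> q0 T) = -1" using fcap play_valid[OF vr vq] T unfolding first_capture_def by blast
    ultimately show ?thesis using rpay_first[OF T] by simp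
  next
    case False
    then show ?thesis using rpay_none fle vq by metis
  qed
qed

lemma bound_ge:
  fixes f :: "'v state \<Rightarrow> real"
  assumes g: "0 < \<gamma>" "\<gamma> < 1"
    and vr: "valid_profile V E N \<rho>" and vq: "valid_state V N q0"
    and fcap: "\<forall>q. valid_state V N q \<and> is_capture N q \<longrightarrow> f q = -1"
    and fge: "\<forall>q. valid_state V N q \<longrightarrow> -1 \<le> f q"
    and fst: "\<forall>q. valid_state V N q \<and> \<not> is_capture N q \<longrightarrow> \<gamma> * f (step N q (\<rho> (snd q) q)) \<le> f q"
  shows "rpay \<gamma> N \<rho> q0 \<le> f q0"
proof -
  have cl: "(\<forall>i<k. \<not> is_capture N (play N \<rho> q0 i)) \<longrightarrow> \<gamma> ^ k * f (play N \<rho> q0 k) \<le> f q0" for k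
  proof (induction k)
    case 0 then show ?case by simp
  next
    case (Suc k)
    show ?case
    proof
      assume a: "\<forall>i<Suc k. \<not> is_capture N (play N \<rho> q0 i)"
      then have ih: "\<gamma> ^ k * f (play N \<rho> q0 k) \<le> f q0" using Suc by simp
      have "valid_state V N (play N \<rho> q0 k)" using play_valid[OF vr vq] .
      moreover have "\<not> is_capture N (play N \<rho> q0 k)" using a by simp
      ultimately have "\<gamma> * f (step N (play N \<rho> q0 k) (\<rho> (snd (play N \<rho> q0 k)) (play N \<rho> q0 k))) \<le> f (play N \<rho> q0 k)" using fst by blast
      then have "\<gamma> * f (play N \<rho> q0 (Suc k)) \<le> f (play N \<rho> q0 k)" by simp
      then have "\<gamma> ^ k * (\<gamma> * f (play N \<rho> q0 (Suc k))) \<le> \<gamma> ^ k * f (play N \<rho> q0 k)"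
        using g by (intro mult_left_mono) auto
      moreover have "\<gamma> ^ Suc k * f (play N \<rho> q0 (Suc k)) = \<gamma> ^ k * (\<gamma> * f (play N \<rho> q0 (Suc k)))"
        by (simp only: power_Suc2 mult.assoc)
      ultimately show "\<gamma> ^ Suc k * f (play N \<rho> q0 (Suc k)) \<le> f q0" using ih by linarith
    qed
  qed
  show ?thesis
  proof (cases "\<exists>t. is_capture N (play N \<rho> q0 t)")
    case True
    then obtain T where T: "first_capture N \<rho> q0 T" using first_capture_exists by blast
    have "\<gamma> ^ T * f (play N \<rho> q0 T) \<le> f q0" using cl T unfolding first_capture_def by blast
    moreover have "f (play N \<rho> q0 T) = -1" using fcap play_valid[OF vr vq] T unfolding first_capture_def by blast
    ultimately show ?thesis using rpay_first[OF T] by simp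
  next
    case False
    have all: "- (\<gamma> ^ k) \<le> f q0" for k
    proof -
      have "\<gamma> ^ k * f (play N \<rho> q0 k) \<le> f q0" using cl False by blast
      moreover have "-1 \<le> f (play N \<rho> q0 k)" using fge play_valid[OF vr vq] by blast
      then have "\<gamma> ^ k * (-1) \<le> \<gamma> ^ k * f (play N \<rho> q0 k)" using g by (intro mult_left_mono) auto
      ultimately show ?thesis by simp
    qed
    have "0 \<le> f q0"
    proof (rule ccontr)
      assume "\<not> 0 \<le> f q0"
      then have "0 < - f q0" by simp
      then obtain k where "\<gamma> ^ k < - f q0" using real_arch_pow_inv g by blast
      then show False using all[of k] by simp
    qed
    then show ?thesis using rpay_none False by metis
  qed
qed

lemma mixing:
  assumes g: "0 < \<gamma>" "\<gamma> < 1"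
    and o1: "cr_optimal \<gamma> V E N \<sigma>1" and o2: "cr_optimal \<gamma> V E N \<sigma>2"
  shows "cr_optimal \<gamma> V E N (\<lambda>i q. if q \<in> P then \<sigma>1 i q else \<sigma>2 i q)"
proof -
  define \<mu> where "\<mu> = (\<lambda>i q. if q \<in> P then \<sigma>1 i q else \<sigma>2 i q)"
  define f where "f = rpay \<gamma> N \<sigma>1"
  have v1: "valid_profile V E N \<sigma>1" and v2: "valid_profile V E N \<sigma>2"
    using o1 o2 unfolding cr_optimal_def by auto
  have vm: "valid_profile V E N \<mu>"
    unfolding valid_profile_def is_strat_def
  proof (intro ballI allI impI)
    fix j s' assume j: "j \<in> {1..N}" and s': "valid_state V N s' \<and> snd s' = j"
    show "\<mu> j s' \<in> cnbhd V E (pos s' j)"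
      using valid_profileD[OF v1, of s'] valid_profileD[OF v2, of s'] s' unfolding \<mu>_def by auto
  qed
  have fcap: "\<forall>q. valid_state V N q \<and> is_capture N q \<longrightarrow> f q = -1"
    unfolding f_def using rpay_capture by blast
  have fge: "\<forall>q. valid_state V N q \<longrightarrow> -1 \<le> f q"
    unfolding f_def using rpay_bounds[OF g] by blast
  have fle: "\<forall>q. valid_state V N q \<longrightarrow> f q \<le> 0"
    unfolding f_def using rpay_bounds[OF g] by blast
  have cons: "\<forall>q. valid_state V N q \<and> \<not> is_capture N q \<longrightarrow> f q = \<gamma> * f (step N q (\<mu> (snd q) q))"
  proof (intro allI impI)
    fix q assume q: "valid_state V N q \<and> \<not> is_capture N q"
    show "f q = \<gamma> * f (step N q (\<mu> (snd q) q))"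
    proof (cases "q \<in> P")
      case True
      then show ?thesis using rpay_shift[of N q \<gamma> \<sigma>1] q unfolding f_def \<mu>_def by simp
    next
      case False
      have vn: "valid_state V N (step N q (\<sigma>2 (snd q) q))"
        using valid_step[of V N q "\<sigma>2 (snd q) q" E] valid_profileD[OF v2, of q] q by blast
      have "rpay \<gamma> N \<sigma>2 q = \<gamma> * rpay \<gamma> N \<sigma>2 (step N q (\<sigma>2 (snd q) q))"
        using rpay_shift[of N q \<gamma> \<sigma>2] q by simp
      then show ?thesis using False opt_val_eq[OF o1 o2] vn q unfolding f_def \<mu>_def by simp
    qed
  qed
  have cons': "\<And>q. valid_state V N q \<Longrightarrow> \<not> is_capture N q \<Longrightarrow> f q = \<gamma> * f (step N q (\<mu> (snd q) q))"
    using cons by blast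
  have loc: "\<And>q v. valid_state V N q \<Longrightarrow> \<not> is_capture N q \<Longrightarrow> v \<in> cnbhd V E (pos q (snd q)) \<Longrightarrow>
      (snd q = N \<longrightarrow> \<gamma> * f (step N q v) \<le> f q) \<and> (snd q \<noteq> N \<longrightarrow> f q \<le> \<gamma> * f (step N q v))"
    unfolding f_def using local_opt[OF o1 g] by blast
  have fmu: "\<forall>q. valid_state V N q \<longrightarrow> rpay \<gamma> N \<mu> q = f q"
  proof (intro allI impI)
    fix q assume q: "valid_state V N q"
    have c1: "\<forall>q. valid_state V N q \<and> \<not> is_capture N q \<longrightarrow> f q \<le> \<gamma> * f (step N q (\<mu> (snd q) q))"
      using cons by simp
    have c2: "\<forall>q. valid_state V N q \<and> \<not> is_capture N q \<longrightarrow> \<gamma> * f (step N q (\<mu> (snd q) q)) \<le> f q"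
      using cons by simp
    have "f q \<le> rpay \<gamma> N \<mu> q"
      using bound_le[OF g vm q fcap fle c1] .
    moreover have "rpay \<gamma> N \<mu> q \<le> f q"
      using bound_ge[OF g vm q fcap fge c2] .
    ultimately show "rpay \<gamma> N \<mu> q = f q" by simp
  qed
  have "cr_optimal \<gamma> V E N \<mu>"
    unfolding cr_optimal_def
  proof (intro conjI[OF vm] allI impI)
    fix q \<sigma>' assume q: "valid_state V N q" and vs: "valid_profile V E N \<sigma>'"
    have vr1: "valid_profile V E N (\<mu>(N := \<sigma>' N))"
      using vm vs unfolding valid_profile_def by auto
    have vr2: "valid_profile V E N (\<sigma>'(N := \<mu> N))"
      using vm vs unfolding valid_profile_def by auto
    have s1: "\<forall>q. valid_state V N q \<and> \<not> is_capture N q \<longrightarrow>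
        \<gamma> * f (step N q ((\<mu>(N := \<sigma>' N)) (snd q) q)) \<le> f q"
    proof (intro allI impI)
      fix x assume x: "valid_state V N x \<and> \<not> is_capture N x"
      show "\<gamma> * f (step N x ((\<mu>(N := \<sigma>' N)) (snd x) x)) \<le> f x"
      proof (cases "snd x = N")
        case True
        have "\<sigma>' N x \<in> cnbhd V E (pos x (snd x))" using valid_profileD[OF vs, of x] x True by simp
        then show ?thesis using loc[of x "\<sigma>' N x"] x True by simp
      next
        case False then show ?thesis using cons'[of x] x by simp
      qed
    qed
    have s2: "\<forall>q. valid_state V N q \<and> \<not> is_capture N q \<longrightarrow>
        f q \<le> \<gamma> * f (step N q ((\<sigma>'(N := \<mu> N)) (snd q) q))"
    proof (intro allI impI)
      fix x assume x: "valid_state V N x \<and> \<not> is_capture N x"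
      show "f x \<le> \<gamma> * f (step N x ((\<sigma>'(N := \<mu> N)) (snd x) x))"
      proof (cases "snd x = N")
        case True then show ?thesis using cons'[of x] x by simp
      next
        case False
        have "\<sigma>' (snd x) x \<in> cnbhd V E (pos x (snd x))" using valid_profileD[OF vs, of x] x by simp
        then show ?thesis using loc[of x "\<sigma>' (snd x) x"] x False by simp
      qed
    qed
    have "rpay \<gamma> N (\<mu>(N := \<sigma>' N)) q \<le> f q"
      using bound_ge[OF g vr1 q fcap fge s1] .
    moreover have "f q \<le> rpay \<gamma> N (\<sigma>'(N := \<mu> N)) q"
      using bound_le[OF g vr2 q fcap fle s2] .
    ultimately show "rpay \<gamma> N (\<mu>(N := \<sigma>' N)) q \<le> rpay \<gamma> N \<mu> q \<and>
        rpay \<gamma> N \<mu> q \<le> rpay \<gamma> N (\<sigma>'(N := \<mu> N)) q" using fmu[rule_format, OF q] by simp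
  qed
  then show ?thesis unfolding \<mu>_def .
qed

lemma snd_step: "snd (step N q v) = next_tok N (snd q)"
  unfolding step_def by simp

lemma turn:
  assumes "snd s = N" "2 \<le> N"
  shows "snd (play N \<sigma> s k) = (if k mod N = 0 then N else k mod N)"
proof (induction k)
  case 0 then show ?case using assms by simp
next
  case (Suc k)
  have "snd (play N \<sigma> s (Suc k)) = snd (play N \<sigma> s k) mod N + 1"
    by (simp add: snd_step next_tok_def)
  also have "\<dots> = (if Suc k mod N = 0 then N else Suc k mod N)"
  proof (cases "k mod N = 0")
    case True
    then have "Suc k mod N = 1" using assms(2) by (simp add: mod_Suc)
    then show ?thesis using Suc True by simp
  next
    case False
    have "k mod N < N" using assms(2) by simp
    then show ?thesis using Suc False by (auto simp: mod_Suc)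
  qed
  finally show ?case .
qed

lemma stay_step:
  assumes "\<pi> (snd q) q = pos q (snd q)"
  shows "fst (step N q (\<pi> (snd q) q)) = fst q"
  using assms unfolding step_def pos_def by simp

lemma stay_inv:
  assumes "\<forall>i. i \<noteq> m \<longrightarrow> \<pi> i = (\<lambda>q. pos q i)" "m - 1 < length (fst s)"
  shows "fst (play N \<pi> s k) = (fst s)[m-1 := pos (play N \<pi> s k) m]"
proof (induction k)
  case 0 then show ?case by (simp add: pos_def)
next
  case (Suc k)
  let ?q = "play N \<pi> s k"
  show ?case
  proof (cases "snd ?q = m")
    case True
    have "fst (play N \<pi> s (Suc k)) = (fst ?q)[m - 1 := \<pi> m ?q]"
      using True by (simp add: step_def)
    also have "\<dots> = (fst s)[m - 1 := \<pi> m ?q]" using Suc by simp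
    finally have e: "fst (play N \<pi> s (Suc k)) = (fst s)[m - 1 := \<pi> m ?q]" .
    then have "pos (play N \<pi> s (Suc k)) m = \<pi> m ?q" using assms(2) by (simp add: pos_def)
    then show ?thesis using e by simp
  next
    case False
    then have "\<pi> (snd ?q) ?q = pos ?q (snd ?q)" using assms(1) by simp
    then have e: "fst (play N \<pi> s (Suc k)) = fst ?q" using stay_step[of \<pi> ?q N] by simp
    then have "pos (play N \<pi> s (Suc k)) m = pos ?q m" by (simp add: pos_def)
    then show ?thesis using e Suc by simp
  qed
qed

theorem mainTheorem13:
  fixes V :: "'v set" and E :: "'v \<Rightarrow> 'v \<Rightarrow> bool" and N :: nat and \<gamma> :: real
    and s :: "'v state" and m :: nat
  assumes "simple_connected_graph V E"
    and "N \<ge> 3"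
    and "0 < \<gamma>" and "\<gamma> < 1"
    and "valid_state V N s" and "snd s = N" and "\<not> is_capture N s"
    and "state_cop_number V E N s = 1"
    and "hatC_is \<gamma> V E N s m"
    and "sure_capture \<gamma> V E N s m"
    and "pos s m \<notin> nbhd V E (pos s N)"
  shows "\<exists>xm st. st = ((fst s)[m - 1 := xm], N) \<and>
           valid_state V N st \<and> snd st = N \<and> \<not> is_capture N st \<and>
           xm \<in> nbhd V E (pos s N) \<and>
           state_cop_number V E N st = 1 \<and>
           hatC_is \<gamma> V E N st m \<and>
           sure_capture \<gamma> V E N st m"
proof -
  note graph = assms(1) and N3 = assms(2) and g = assms(3,4) and vs = assms(5)
    and sndN = assms(6) and ncs = assms(7)
  have lenN: "length (fst s) = N" using vs unfolding valid_state_def by simp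
  have m: "m \<in> {1..N-1}" and ex: "\<exists>\<sigma> t. cr_optimal \<gamma> V E N \<sigma> \<and> first_capture N \<sigma> s t"
    using assms(9) unfolding hatC_is_def by auto
  obtain \<sigma>0 where o0: "cr_optimal \<gamma> V E N \<sigma>0" using ex by blast
  have v0: "valid_profile V E N \<sigma>0" using o0 unfolding cr_optimal_def by simp
  define \<tau>0 where "\<tau>0 = \<sigma>0 m"
  have t0h: "\<tau>0 \<in> hatSigma \<gamma> V E N m" unfolding hatSigma_def \<tau>0_def using o0 by blast
  have t0s: "is_strat V E N m \<tau>0" using v0 m unfolding valid_profile_def \<tau>0_def by auto
  define stay :: "'v profile" where "stay = (\<lambda>i q. pos q i)"
  have vstay: "valid_profile V E N stay"
    unfolding valid_profile_def is_strat_def stay_def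
  proof (intro ballI allI impI)
    fix i and q :: "'v state" assume i: "i \<in> {1..N}" and q: "valid_state V N q \<and> snd q = i"
    then have "fst q ! (i - 1) \<in> set (fst q)" unfolding valid_state_def by auto
    then have "pos q i \<in> V" using q unfolding valid_state_def pos_def by auto
    then show "pos q i \<in> cnbhd V E (pos q i)" unfolding cnbhd_def by simp
  qed
  define \<pi> where "\<pi> = stay(m := \<tau>0)"
  have v\<pi>: "valid_profile V E N \<pi>"
    using vstay t0s m unfolding valid_profile_def \<pi>_def by auto
  obtain t where t: "first_capture N \<pi> s t" and tm: "pos (play N \<pi> s t) m = pos (play N \<pi> s t) N"
    using assms(10) t0h vstay unfolding sure_capture_def \<pi>_def by blast
  have m1: "m - 1 < length (fst s)" using m lenN by auto
  have stayp: "\<forall>i. i \<noteq> m \<longrightarrow> \<pi> i = (\<lambda>q. pos q i)" unfolding \<pi>_def stay_def by simp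
  have inv: "\<And>k. fst (play N \<pi> s k) = (fst s)[m-1 := pos (play N \<pi> s k) m]"
    using stay_inv[OF stayp m1] .
  have robpos: "\<And>k. pos (play N \<pi> s k) N = pos s N"
  proof -
    fix k
    have "N - 1 \<noteq> m - 1" using m by auto
    moreover have "fst (play N \<pi> s k) ! (N - 1) = ((fst s)[m-1 := pos (play N \<pi> s k) m]) ! (N - 1)"
      using arg_cong[OF inv[of k], of "\<lambda>l. l ! (N - 1)"] .
    ultimately show "pos (play N \<pi> s k) N = pos s N" unfolding pos_def
      by (metis nth_list_update_neq)
  qed
  have turn\<pi>: "\<And>k. snd (play N \<pi> s k) = (if k mod N = 0 then N else k mod N)"
    using turn[OF sndN] N3 by simp
  have "t \<noteq> 0"
  proof
    assume "t = 0" then show False using t ncs unfolding first_capture_def by simp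
  qed
  then obtain t1 where t1: "t = Suc t1" by (cases t) auto
  have nc1: "\<not> is_capture N (play N \<pi> s t1)" using t t1 unfolding first_capture_def by simp
  have mover: "snd (play N \<pi> s t1) = m"
  proof (rule ccontr)
    assume a: "snd (play N \<pi> s t1) \<noteq> m"
    then have "\<pi> (snd (play N \<pi> s t1)) (play N \<pi> s t1) = pos (play N \<pi> s t1) (snd (play N \<pi> s t1))"
      using stayp by simp
    then have "fst (play N \<pi> s t) = fst (play N \<pi> s t1)"
      using stay_step[of \<pi> "play N \<pi> s t1" N] t1 by simp
    then have "pos (play N \<pi> s t1) m = pos (play N \<pi> s t1) N" using tm unfolding pos_def by simp
    then have "is_capture N (play N \<pi> s t1)" using m unfolding is_capture_def by blast
    then show False using nc1 by simp
  qed
  have t1mod: "t1 mod N = m"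
    using turn\<pi>[of t1] mover m by (auto split: if_splits)
  have mle: "m \<le> t1" using t1mod by (metis mod_less_eq_dividend)
  define t' where "t' = t1 - m"
  have t1eq: "t1 = t' + m" unfolding t'_def using mle by simp
  have t'mod: "t' mod N = 0"
  proof -
    have "t1 = N * (t1 div N) + m" using t1mod by (metis div_mult_mod_eq mult.commute)
    then have "t' = N * (t1 div N)" using t1eq by simp
    then show ?thesis by simp
  qed
  have sndst: "snd (play N \<pi> s t') = N" using turn\<pi>[of t'] t'mod by simp
  have same: "\<And>r. r \<le> m \<Longrightarrow> fst (play N \<pi> s (t' + r)) = fst (play N \<pi> s t')"
  proof -
    fix r show "r \<le> m \<Longrightarrow> fst (play N \<pi> s (t' + r)) = fst (play N \<pi> s t')"
    proof (induction r)
      case 0 then show ?case by simp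
    next
      case (Suc r)
      have rN: "r < N" using Suc.prems m by auto
      have "(t' + r) mod N = r" using t'mod rN by (simp add: mod_add_left_eq[symmetric])
      then have "snd (play N \<pi> s (t' + r)) \<noteq> m" using turn\<pi>[of "t' + r"] Suc.prems m by auto
      then have "\<pi> (snd (play N \<pi> s (t' + r))) (play N \<pi> s (t' + r)) = pos (play N \<pi> s (t' + r)) (snd (play N \<pi> s (t' + r)))"
        using stayp by simp
      then have "fst (play N \<pi> s (Suc (t' + r))) = fst (play N \<pi> s (t' + r))"
        using stay_step[of \<pi> "play N \<pi> s (t' + r)" N] by simp
      then show ?case using Suc by simp
    qed
  qed
  define st where "st = play N \<pi> s t'"
  define xm where "xm = pos st m"
  have st_eq: "st = ((fst s)[m - 1 := xm], N)"
    using inv[of t'] sndst unfolding st_def xm_def by (simp add: prod_eq_iff)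
  have vst: "valid_state V N st" unfolding st_def using play_valid[OF v\<pi> vs] .
  have f1: "fst (play N \<pi> s t1) = fst st" using same[of m] t1eq unfolding st_def by simp
  have p1m: "pos (play N \<pi> s t1) m = xm" using f1 unfolding xm_def pos_def by simp
  have p1N: "pos (play N \<pi> s t1) N = pos s N" using robpos .
  have vt1: "valid_state V N (play N \<pi> s t1)" using play_valid[OF v\<pi> vs] .
  have ptm: "pos (play N \<pi> s t) m = \<tau>0 (play N \<pi> s t1)"
  proof -
    have "length (fst (play N \<pi> s t1)) = N" using vt1 unfolding valid_state_def by simp
    then show ?thesis using t1 mover m unfolding \<pi>_def by (auto simp: step_def pos_def)
  qed
  have "\<tau>0 (play N \<pi> s t1) \<in> cnbhd V E (pos (play N \<pi> s t1) m)"
    using is_stratD[OF t0s vt1 mover] .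
  then have ucn: "pos s N \<in> cnbhd V E xm" using ptm tm robpos[of t] p1m by simp
  have "xm \<noteq> pos s N"
  proof
    assume "xm = pos s N"
    then have "is_capture N (play N \<pi> s t1)" using p1m p1N m unfolding is_capture_def by auto
    then show False using nc1 by simp
  qed
  then have "E xm (pos s N)" using ucn unfolding cnbhd_def by auto
  then have xmn: "xm \<in> nbhd V E (pos s N)" using graph unfolding simple_connected_graph_def nbhd_def by blast
  have t't: "t' < t" using t1eq t1 by simp
  have ncst: "\<not> is_capture N st" using t t't unfolding st_def first_capture_def by blast
  have key: "\<And>\<tau>' \<sigma>. \<tau>' \<in> hatSigma \<gamma> V E N m \<Longrightarrow> valid_profile V E N \<sigma> \<Longrightarrow>
      \<exists>T. first_capture N (\<sigma>(m := \<tau>')) st T \<and>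
          pos (play N (\<sigma>(m := \<tau>')) st T) m = pos (play N (\<sigma>(m := \<tau>')) st T) N"
  proof -
    fix \<tau>' \<sigma> assume h: "\<tau>' \<in> hatSigma \<gamma> V E N m" and v\<sigma>: "valid_profile V E N \<sigma>"
    obtain \<sigma>2 where o2: "cr_optimal \<gamma> V E N \<sigma>2" and t2: "\<sigma>2 m = \<tau>'"
      using h unfolding hatSigma_def by blast
    define P where "P = (\<lambda>j. play N \<pi> s j) ` {..<t'}"
    define \<mu> where "\<mu> = (\<lambda>i q. if q \<in> P then \<sigma>0 i q else \<sigma>2 i q)"
    have o\<mu>: "cr_optimal \<gamma> V E N \<mu>" unfolding \<mu>_def using mixing[OF g o0 o2] .
    have \<mu>h: "\<mu> m \<in> hatSigma \<gamma> V E N m" unfolding hatSigma_def using o\<mu> by blast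
    define \<sigma>' where "\<sigma>' = (\<lambda>i q. if q \<in> P then \<pi> i q else \<sigma> i q)"
    have v\<sigma>': "valid_profile V E N \<sigma>'"
      unfolding valid_profile_def is_strat_def
    proof (intro ballI allI impI)
      fix j s' assume j: "j \<in> {1..N}" and s': "valid_state V N s' \<and> snd s' = j"
      show "\<sigma>' j s' \<in> cnbhd V E (pos s' j)"
        using valid_profileD[OF v\<pi>, of s'] valid_profileD[OF v\<sigma>, of s'] s' unfolding \<sigma>'_def by auto
    qed
    define \<rho> where "\<rho> = \<sigma>(m := \<tau>')"
    define \<rho>' where "\<rho>' = \<sigma>'(m := \<mu> m)"
    have \<rho>'eq: "\<rho>' = (\<lambda>i q. if q \<in> P then \<pi> i q else \<rho> i q)"
      unfolding \<rho>'_def \<sigma>'_def \<mu>_def \<rho>_def \<pi>_def \<tau>0_def using t2 by (auto simp: fun_eq_iff)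
    obtain T where T: "first_capture N \<rho>' s T" and Tm: "pos (play N \<rho>' s T) m = pos (play N \<rho>' s T) N"
      using assms(10) \<mu>h v\<sigma>' unfolding sure_capture_def \<rho>'_def by blast
    have pre: "\<forall>j\<le>t'. play N \<rho>' s j = play N \<pi> s j"
    proof -
      have "\<forall>i<t'. \<pi> (snd (play N \<pi> s i)) (play N \<pi> s i) = \<rho>' (snd (play N \<pi> s i)) (play N \<pi> s i)"
        unfolding \<rho>'eq P_def by auto
      then show ?thesis using play_agree[where \<sigma>a=\<pi> and \<sigma>b=\<rho>' and k=t'] by simp
    qed
    have stq: "play N \<rho>' s t' = st" using pre unfolding st_def by simp
    have Tgt: "t' < T"
    proof (rule ccontr)
      assume "\<not> t' < T"
      then have "T \<le> t'" by simp
      then have "play N \<rho>' s T = play N \<pi> s T" using pre by simp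
      moreover have "\<not> is_capture N (play N \<pi> s T)" using t t't \<open>T \<le> t'\<close> unfolding first_capture_def by simp
      ultimately show False using T unfolding first_capture_def by simp
    qed
    define D where "D = T - t'"
    have shift: "\<And>j. play N \<rho>' st j = play N \<rho>' s (t' + j)" using play_add[of N \<rho>' s t'] stq by simp
    have nohit: "\<forall>j<D. play N \<rho>' st j \<notin> P"
    proof (intro allI impI notI)
      fix j assume jD: "j < D" and jP: "play N \<rho>' st j \<in> P"
      then obtain i0 where i0: "i0 < t'" and e: "play N \<rho>' st j = play N \<pi> s i0" unfolding P_def by auto
      have e2: "play N \<rho>' s i0 = play N \<rho>' s (t' + j)" using e pre i0 shift by simp
      define x where "x = D - j"
      have "play N \<rho>' s (i0 + x) = play N \<rho>' s (t' + j + x)"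
        using play_add[of N \<rho>' s i0 x] play_add[of N \<rho>' s "t' + j" x] e2 by simp
      also have "t' + j + x = T" unfolding x_def D_def using jD Tgt D_def by simp
      finally have "is_capture N (play N \<rho>' s (i0 + x))" using T unfolding first_capture_def by simp
      moreover have "i0 + x < T" unfolding x_def D_def using jD Tgt i0 D_def by simp
      ultimately show False using T unfolding first_capture_def by blast
    qed
    have agr: "\<forall>j\<le>D. play N \<rho> st j = play N \<rho>' st j"
    proof -
      have "\<forall>i<D. \<rho>' (snd (play N \<rho>' st i)) (play N \<rho>' st i) = \<rho> (snd (play N \<rho>' st i)) (play N \<rho>' st i)"
        using nohit unfolding \<rho>'eq by auto
      then show ?thesis using play_agree[where \<sigma>a=\<rho>' and \<sigma>b=\<rho> and k=D] by simp
    qed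
    have TD: "T = t' + D" unfolding D_def using Tgt by simp
    have "first_capture N \<rho> st D"
      unfolding first_capture_def
    proof
      show "is_capture N (play N \<rho> st D)" using agr shift T TD unfolding first_capture_def by simp
      show "\<forall>t'a<D. \<not> is_capture N (play N \<rho> st t'a)"
      proof (intro allI impI)
        fix j assume "j < D"
        then show "\<not> is_capture N (play N \<rho> st j)" using agr shift T TD unfolding first_capture_def by simp
      qed
    qed
    moreover have "pos (play N \<rho> st D) m = pos (play N \<rho> st D) N" using agr shift Tm TD by simp
    ultimately show "\<exists>T. first_capture N (\<sigma>(m := \<tau>')) st T \<and>
          pos (play N (\<sigma>(m := \<tau>')) st T) m = pos (play N (\<sigma>(m := \<tau>')) st T) N"
      unfolding \<rho>_def by blast
  qed
  have sure: "sure_capture \<gamma> V E N st m" unfolding sure_capture_def using key by blast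
  have kcc: "k_cops_capture V E N st 1"
    unfolding k_cops_capture_def
  proof (intro exI conjI)
    show "{m} \<subseteq> {1..N-1}" using m by simp
    show "card {m} = 1" by simp
    show "\<forall>i\<in>{m}. is_strat V E N i ((\<lambda>_. \<tau>0) i)" using t0s by simp
    show "\<forall>\<sigma>. valid_profile V E N \<sigma> \<longrightarrow>
        (\<exists>t. is_capture N (play N (\<lambda>i. if i \<in> {m} then (\<lambda>_. \<tau>0) i else \<sigma> i) st t))"
    proof (intro allI impI)
      fix \<sigma> assume "valid_profile V E N \<sigma>"
      then obtain T where "first_capture N (\<sigma>(m := \<tau>0)) st T" using key[OF t0h] by blast
      moreover have "(\<lambda>i. if i \<in> {m} then (\<lambda>_. \<tau>0) i else \<sigma> i) = \<sigma>(m := \<tau>0)" by (auto simp: fun_eq_iff)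
      ultimately show "\<exists>t. is_capture N (play N (\<lambda>i. if i \<in> {m} then (\<lambda>_. \<tau>0) i else \<sigma> i) st t)"
        unfolding first_capture_def by auto
    qed
  qed
  have scn: "state_cop_number V E N st = 1"
  proof -
    have "(LEAST k. k \<in> {1..N-1} \<and> k_cops_capture V E N st k) = 1"
      using kcc N3 by (intro Least_equality) auto
    moreover have "\<exists>k\<in>{1..N-1}. k_cops_capture V E N st k" using kcc N3 by (intro bexI[of _ 1]) auto
    ultimately show ?thesis unfolding state_cop_number_def by (simp add: one_enat_def)
  qed
  have hc: "hatC_is \<gamma> V E N st m"
    unfolding hatC_is_def
  proof (intro conjI)
    show "m \<in> {1..N-1}" using m .
    obtain T where "first_capture N (\<sigma>0(m := \<tau>0)) st T" using key[OF t0h v0] by blast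
    then show "\<exists>\<sigma> t. cr_optimal \<gamma> V E N \<sigma> \<and> first_capture N \<sigma> st t" using o0 unfolding \<tau>0_def by auto
    show "\<forall>\<sigma> t. cr_optimal \<gamma> V E N \<sigma> \<and> first_capture N \<sigma> st t \<longrightarrow>
        pos (play N \<sigma> st t) m = pos (play N \<sigma> st t) N"
    proof (intro allI impI)
      fix \<sigma> t assume a: "cr_optimal \<gamma> V E N \<sigma> \<and> first_capture N \<sigma> st t"
      have "\<sigma> m \<in> hatSigma \<gamma> V E N m" using a unfolding hatSigma_def by blast
      moreover have "valid_profile V E N \<sigma>" using a unfolding cr_optimal_def by simp
      ultimately obtain T where T: "first_capture N \<sigma> st T" "pos (play N \<sigma> st T) m = pos (play N \<sigma> st T) N"
        using key[of "\<sigma> m" \<sigma>] by auto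
      have "t = T" using first_capture_unique a T(1) by blast
      then show "pos (play N \<sigma> st t) m = pos (play N \<sigma> st t) N" using T(2) by simp
    qed
  qed
  show ?thesis
    using st_eq vst ncst xmn scn hc sure by (intro exI[of _ xm] exI[of _ st]) simp
qed

end
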